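(* Let $(H_i)_{i=0}^\infty = (2^{\alpha_i}3^{\beta_i})_{i=0}^\infty$ be the increasing enumeration of $\mathcal{H}=\{2^\alpha3^\beta : \alpha,\beta\in\mathbb{N}_0\}$, and define $f\colon\mathbb{N}_0\to\{+1,-1\}$ by $f(0)=+1$ and $f(n)=(-1)^{\alpha_i+\beta_i}$ for $n\in\{H_i,H_i+1,\dots,H_{i+1}-1\}$, $i\in\mathbb{N}_0$. Then for almost all $n\in\mathbb{N}_0$ we have $f(n+1)=f(n)$, $f(2n)=-f(n)$ and $f(3n)=-f(n)$.
   Context: $\mathbb{N}_0=\{0,1,2,\dots\}$. A property holds for almost all $n\in\mathbb{N}_0$ if the set of $n$ where it fails has upper density $\limsup_{N\to\infty}|\cdot\cap\{0,\dots,N-1\}|/N$ equal to $0$. *)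

theory Defs
  imports Complex_Main "HOL-Library.Infinite_Set" "HOL-Library.Liminf_Limsup" "HOL-Library.Extended_Real"
begin

definition hamming :: "nat set" where
  "hamming = {2 ^ a * 3 ^ b | a b. True}"

definition H :: "nat \<Rightarrow> nat" where
  "H i = enumerate hamming i"

definition alpha_beta :: "nat \<Rightarrow> nat \<times> nat" where
  "alpha_beta i = (THE p. H i = 2 ^ fst p * 3 ^ snd p)"

definition alpha :: "nat \<Rightarrow> nat" where "alpha i = fst (alpha_beta i)"
definition beta :: "nat \<Rightarrow> nat" where "beta i = snd (alpha_beta i)"

definition f :: "nat \<Rightarrow> int" where
  "f n = (if n = 0 then 1
          else (let i = (THE i. H i \<le> n \<and> n < H (Suc i)) in (-1) ^ (alpha i + beta i)))"

definition upper_density :: "nat set \<Rightarrow> ereal" where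
  "upper_density A = limsup (\<lambda>N. ereal (real (card (A \<inter> {0..<N})) / real N))"

definition almost_all :: "(nat \<Rightarrow> bool) \<Rightarrow> bool" where
  "almost_all P \<longleftrightarrow> upper_density {n. \<not> P n} = 0"

end

theory Submission imports Defs "HOL-Analysis.Kronecker_Approximation_Theorem" "HOL-Real_Asymp.Real_Asymp" begin

lemma ham_mem[simp]: "2^a*3^b \<in> hamming" by (auto simp: hamming_def)

lemma ham_pos: "h \<in> hamming \<Longrightarrow> h > 0" by (auto simp: hamming_def)

lemma ham_inf: "infinite hamming"
  unfolding infinite_nat_iff_unbounded_le
proof
  fix m :: nat
  have "m \<le> 2^m*3^0" by simp
  then show "\<exists>n\<ge>m. n \<in> hamming" using ham_mem by blast
qed

lemma uniq23: "(2::nat)^a*3^b = 2^c*3^d \<Longrightarrow> a = c \<and> b = d"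
proof (induction a arbitrary: c)
  case 0
  note z = this
  then show ?case
  proof (cases c)
    case 0 with z have "(3::nat)^b = 3^d" by simp
    with 0 show ?thesis by simp
  next
    case (Suc c') with z have "(3::nat)^b = 2*(2^c'*3^d)" by simp
    then have "even ((3::nat)^b)" by presburger
    then show ?thesis by simp
  qed
next
  case (Suc a)
  show ?case
  proof (cases c)
    case 0 with Suc.prems have "(3::nat)^d = 2*(2^a*3^b)" by simp
    then have "even ((3::nat)^d)" by presburger
    then show ?thesis by simp
  next
    case (Suc c') with Suc.prems have "(2::nat)^a*3^b = 2^c'*3^d" by simp
    with Suc.IH Suc show ?thesis by auto
  qed
qed

definition ismax :: "nat \<Rightarrow> nat \<Rightarrow> bool" where
  "ismax n h \<longleftrightarrow> h \<in> hamming \<and> h \<le> n \<and> (\<forall>h'\<in>hamming. h' \<le> n \<longrightarrow> h' \<le> h)"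

lemma ismax_ex: assumes "n \<ge> 1" shows "\<exists>h. ismax n h"
proof -
  let ?S = "{h\<in>hamming. h \<le> n}"
  have fin: "finite ?S" by auto
  have "1 \<in> ?S" using assms ham_mem[of 0 0] by simp
  then have ne: "?S \<noteq> {}" by blast
  have "ismax n (Max ?S)" unfolding ismax_def
    using Max_in[OF fin ne] Max_ge[OF fin] by auto
  then show ?thesis by blast
qed

lemma ismax_unique: "ismax n h \<Longrightarrow> ismax n h' \<Longrightarrow> h = h'"
  unfolding ismax_def by (meson le_antisym)

lemma ismax_lt2: assumes "ismax n h" shows "n < 2*h"
proof (rule ccontr)
  assume "\<not> n < 2*h"
  obtain a b where h: "h = 2^a*3^b" using assms by (auto simp: ismax_def hamming_def)
  have "2*h = 2^Suc a*3^b" using h by simp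
  then have "2*h \<in> hamming" by (metis ham_mem)
  with assms \<open>\<not> n < 2*h\<close> have "2*h \<le> h" unfolding ismax_def by auto
  with ham_pos[of h] assms show False by (auto simp: ismax_def)
qed

lemma H_in: "H i \<in> hamming" unfolding H_def using enumerate_in_set ham_inf by blast
lemma H_mono: "H i < H j \<longleftrightarrow> i < j" unfolding H_def using ham_inf by simp
lemma H_mono_le: "H i \<le> H j \<longleftrightarrow> i \<le> j" unfolding H_def using ham_inf by simp
lemma H_ex: "h \<in> hamming \<Longrightarrow> \<exists>i. H i = h" unfolding H_def using enumerate_Ex ham_inf by blast

lemma f_eq: assumes "n \<ge> 1" "ismax n (2^a*3^b)" shows "f n = (-1)^(a+b)"
proof -
  obtain i where i: "H i = 2^a*3^b" using H_ex ham_mem by blast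
  have hi: "H i \<le> n" using assms i by (simp add: ismax_def)
  have hs: "n < H (Suc i)"
  proof (rule ccontr)
    assume "\<not> n < H (Suc i)"
    then have "H (Suc i) \<le> H i" using assms(2) H_in i unfolding ismax_def by auto
    then show False using H_mono_le by simp
  qed
  have th: "(THE i. H i \<le> n \<and> n < H (Suc i)) = i"
  proof (rule the_equality)
    show "H i \<le> n \<and> n < H (Suc i)" using hi hs by simp
  next
    fix j assume j: "H j \<le> n \<and> n < H (Suc j)"
    then have "H j \<le> H i" using assms(2) H_in i unfolding ismax_def by auto
    then have "j \<le> i" using H_mono_le by simp
    moreover have "H i < H (Suc j)" using j hi by simp
    then have "i < Suc j" using H_mono by simp
    ultimately show "j = i" by simp
  qed
  have ab: "alpha_beta i = (a, b)" unfolding alpha_beta_def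
  proof (rule the_equality)
    show "H i = 2 ^ fst (a, b) * 3 ^ snd (a, b)" using i by simp
  next
    fix p :: "nat \<times> nat" assume "H i = 2 ^ fst p * 3 ^ snd p"
    then have "(2::nat)^a*3^b = 2 ^ fst p * 3 ^ snd p" using i by simp
    then show "p = (a, b)" using uniq23 by (metis prod.collapse)
  qed
  show ?thesis using assms(1) th ab by (simp add: f_def alpha_def beta_def Let_def)
qed


lemma ismax_ham: "ismax n h \<Longrightarrow> \<exists>a b. h = 2^a*3^b"
  unfolding ismax_def hamming_def by auto

lemma bad1: assumes "n \<ge> 1" "Suc n \<notin> hamming" shows "f (Suc n) = f n"
proof -
  obtain h where h: "ismax n h" using ismax_ex assms by blast
  then obtain a b where hab: "h = 2^a*3^b" using ismax_ham by blast
  have "ismax (Suc n) h" using h assms(2) unfolding ismax_def by (metis le_Suc_eq le_SucI)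
  then show ?thesis using f_eq[of n a b] f_eq[of "Suc n" a b] h hab assms(1) by simp
qed

lemma bad2: assumes "n \<ge> 1" "f (2*n) \<noteq> - f n"
  shows "\<exists>d h. ismax n h \<and> 2*h < 3^d \<and> 3^d \<le> 2*n"
proof -
  obtain h where h: "ismax n h" using ismax_ex assms by blast
  then obtain a b where hab: "h = 2^a*3^b" using ismax_ham by blast
  have "2*n \<ge> 1" using assms by simp
  then obtain h' where h': "ismax (2*n) h'" using ismax_ex by blast
  then obtain c d where cd: "h' = 2^c*3^d" using ismax_ham by blast
  have "2*h = 2^Suc a*3^b" using hab by simp
  then have h2: "2*h \<in> hamming" by (metis ham_mem)
  have "2*h \<le> 2*n" using h by (simp add: ismax_def)
  then have le: "2*h \<le> h'" using h' h2 unfolding ismax_def by auto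
  have fn: "f n = (-1)^(a+b)" using f_eq h hab assms(1) by blast
  show ?thesis
  proof (cases "h' = 2*h")
    case True
    then have "ismax (2*n) (2^Suc a*3^b)" using h' hab by (simp add: mult.assoc)
    moreover have "2*n \<ge> 1" using assms by simp
    ultimately have "f (2*n) = (-1)^(Suc a+b)" using f_eq by blast
    with fn assms(2) show ?thesis by simp
  next
    case False
    then have lt: "2*h < h'" using le by simp
    show ?thesis
    proof (cases c)
      case 0
      then have "2*h < 3^d \<and> 3^d \<le> 2*n" using lt h' cd by (auto simp: ismax_def)
      then show ?thesis using h by blast
    next
      case (Suc c')
      have "2^c'*3^d \<in> hamming" by simp
      moreover have "2*(2^c'*3^d) = h'" using cd Suc by simp
      moreover have "h' \<le> 2*n" using h' by (simp add: ismax_def)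
      ultimately have "2^c'*3^d \<le> h" using h unfolding ismax_def by auto
      then have "h' \<le> 2*h" using cd Suc by simp
      with lt show ?thesis by simp
    qed
  qed
qed

lemma bad3: assumes "n \<ge> 1" "f (3*n) \<noteq> - f n"
  shows "\<exists>c h. ismax n h \<and> 3*h < 2^c \<and> 2^c \<le> 3*n"
proof -
  obtain h where h: "ismax n h" using ismax_ex assms by blast
  then obtain a b where hab: "h = 2^a*3^b" using ismax_ham by blast
  have "3*n \<ge> 1" using assms by simp
  then obtain h' where h': "ismax (3*n) h'" using ismax_ex by blast
  then obtain c d where cd: "h' = 2^c*3^d" using ismax_ham by blast
  have "3*h = 2^a*3^Suc b" using hab by simp
  then have h2: "3*h \<in> hamming" by (metis ham_mem)
  have "3*h \<le> 3*n" using h by (simp add: ismax_def)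
  then have le: "3*h \<le> h'" using h' h2 unfolding ismax_def by auto
  have fn: "f n = (-1)^(a+b)" using f_eq h hab assms(1) by blast
  show ?thesis
  proof (cases "h' = 3*h")
    case True
    then have "ismax (3*n) (2^a*3^Suc b)" using h' hab by (simp add: mult.assoc mult.left_commute)
    moreover have "3*n \<ge> 1" using assms by simp
    ultimately have "f (3*n) = (-1)^(a+Suc b)" using f_eq by blast
    with fn assms(2) show ?thesis by simp
  next
    case False
    then have lt: "3*h < h'" using le by simp
    show ?thesis
    proof (cases d)
      case 0
      then have "3*h < 2^c \<and> 2^c \<le> 3*n" using lt h' cd by (auto simp: ismax_def)
      then show ?thesis using h by blast
    next
      case (Suc d')
      have "2^c*3^d' \<in> hamming" by simp
      moreover have "3*(2^c*3^d') = h'" using cd Suc by simp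
      moreover have "h' \<le> 3*n" using h' by (simp add: ismax_def)
      ultimately have "2^c*3^d' \<le> h" using h unfolding ismax_def by auto
      then have "h' \<le> 3*h" using cd Suc by simp
      with lt show ?thesis by simp
    qed
  qed
qed

lemma gap_from_ratio:
  fixes p q a b :: nat and \<epsilon> :: real
  assumes p: "p \<ge> 2" and r1: "1 < real q^b / real p^a" and r2: "real q^b / real p^a < 1+\<epsilon>"
    and mem: "\<And>x y. p^x*q^y \<in> hamming"
  shows "\<exists>Y. \<forall>y\<ge>Y. \<exists>h\<in>hamming. y < real h \<and> real h \<le> (1+\<epsilon>)*y"
proof -
  define \<rho> where "\<rho> = real q^b / real p^a"
  obtain K where K: "real p < \<rho>^K" using real_arch_pow r1 \<rho>_def by blast
  have p1: "(1::real) < real p" using p by simp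
  have pa: "real p^a > 0" using p by simp
  have \<rho>0: "\<rho> > 0" using r1 \<rho>_def by simp
  have "\<forall>y\<ge>real p^(a*K). \<exists>h\<in>hamming. y < real h \<and> real h \<le> (1+\<epsilon>)*y"
  proof (intro allI impI)
    fix y :: real assume yY: "y \<ge> real p^(a*K)"
    have y1: "y \<ge> 1" using yY p1 by (meson one_le_power less_imp_le order_trans)
    obtain n where n: "y < real p^n" using real_arch_pow p1 by blast
    define n0 where "n0 = (LEAST n. y < real p^n)"
    have n0: "y < real p^n0" unfolding n0_def using n by (rule LeastI)
    have "n0 \<noteq> 0" using n0 y1 by (metis not_less power_0)
    then obtain m where m: "n0 = Suc m" using not0_implies_Suc by blast
    have pm: "real p^m \<le> y" using not_less_Least[of m "\<lambda>n. y < real p^n"] m n0_def by fastforce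
    have pm1: "y < real p^Suc m" using n0 m by simp
    have "real p^(a*K) < real p^Suc m" using yY pm1 by linarith
    then have aKm: "a*K \<le> m" by (metis power_strict_increasing_iff[OF p1] less_Suc_eq_le)
    define g where "g k = real p^m * \<rho>^k" for k
    have gK: "y < g K"
    proof -
      have "real p^m * real p < real p^m * \<rho>^K" using K p by simp
      then show ?thesis using pm1 g_def by (simp add: mult.commute)
    qed
    define k where "k = (LEAST k. y < g k)"
    have gk: "y < g k" unfolding k_def using gK by (rule LeastI)
    have kK: "k \<le> K" unfolding k_def using gK by (rule Least_le)
    have "k \<noteq> 0" using gk pm g_def by (metis mult.right_neutral not_less power_0)
    then obtain k' where k': "k = Suc k'" using not0_implies_Suc by blast
    have gk': "g k' \<le> y" using not_less_Least[of k' "\<lambda>k. y < g k"] k' k_def by fastforce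
    have "g k = \<rho> * g k'" using k' g_def by simp
    also have "\<dots> \<le> \<rho> * y" using gk' \<rho>0 by simp
    also have "\<dots> \<le> (1+\<epsilon>)*y" using r2 \<rho>_def y1 by (intro mult_right_mono) auto
    finally have gkle: "g k \<le> (1+\<epsilon>)*y" .
    have akm: "a*k \<le> m" using kK aKm by (meson le_trans mult_le_mono2)
    have "real (p^(m - a*k) * q^(b*k)) = g k"
    proof -
      have e1: "real p^m = real p^(m-a*k) * real p^(a*k)" using akm by (simp flip: power_add)
      have e2: "\<rho>^k = real q^(b*k) / real p^(a*k)" unfolding \<rho>_def by (simp add: power_divide power_mult)
      have pak: "real p^(a*k) > 0" using p by simp
      have "g k = real p^(m-a*k) * real p^(a*k) * (real q^(b*k) / real p^(a*k))" using e1 e2 g_def by simp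
      also have "\<dots> = real p^(m-a*k) * real q^(b*k)"
        using pak by (metis less_irrefl nonzero_mult_div_cancel_right times_divide_eq_right mult.assoc mult.commute)
      finally show ?thesis by simp
    qed
    then show "\<exists>h\<in>hamming. y < real h \<and> real h \<le> (1+\<epsilon>)*y" using gk gkle mem by metis
  qed
  then show ?thesis by blast
qed


lemma exp_small: fixes d :: real assumes "0 < d" "d \<le> 1/2" "2*d < e"
  shows "1 < exp d \<and> exp d < 1 + e"
proof
  show "1 < exp d" using assms by simp
  have "norm (exp d) \<le> 1 + 2 * norm d" using exp_bound_lemma[of d] assms by simp
  then show "exp d < 1 + e" using assms by simp
qed

lemma ratio_ex: assumes "\<epsilon> > 0"
  shows "\<exists>a b::nat. (1 < real 3^b/real 2^a \<and> real 3^b/real 2^a < 1+\<epsilon>) \<or>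
                    (1 < real 2^a/real 3^b \<and> real 2^a/real 3^b < 1+\<epsilon>)"
proof -
  obtain N::nat where N: "N \<noteq> 0" "inverse (real N) < min (1/2) (\<epsilon>/2)"
    using real_arch_inverse[of "min (1/2) (\<epsilon>/2)"] assms by auto
  define \<theta> where "\<theta> = ln 3 / ln (2::real)"
  have N0: "N > 0" using N by simp
  obtain h k where hk: "0 < k" "\<bar>of_int k * \<theta> - of_int h\<bar> < 1/N"
    using Dirichlet_approx[OF N0, of \<theta>] by blast
  have l2: "ln (2::real) > 0" by simp
  have l23: "ln (2::real) < ln 3" by simp
  have th1: "\<theta> > 1" using l2 l23 \<theta>_def by simp
  have "real_of_int k * \<theta> \<ge> \<theta>" using hk(1) th1 by simp
  moreover have iN: "1/real N < 1/2" using N(2) by (simp add: inverse_eq_divide)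
  moreover have "real_of_int k * \<theta> - real_of_int h < 1/2" using hk(2) iN by (simp add: abs_less_iff)
  ultimately have "real_of_int h > 0" using th1 by linarith
  then have h1: "h \<ge> 1" by simp
  define kn where "kn = nat k"
  define hn where "hn = nat h"
  have kk: "real_of_int k = real kn" using hk(1) kn_def by simp
  have hh: "real_of_int h = real hn" using h1 hn_def by simp
  have hn1: "hn \<ge> 1" using h1 hn_def by simp
  define \<delta> where "\<delta> = real kn * ln 3 - real hn * ln 2"
  have \<delta>eq: "\<delta> = ln 2 * (of_int k * \<theta> - of_int h)" using kk hh \<delta>_def \<theta>_def l2 by (simp add: algebra_simps)
  have "\<bar>\<delta>\<bar> = ln 2 * \<bar>of_int k * \<theta> - of_int h\<bar>" using \<delta>eq l2 by (simp add: abs_mult)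
  also have "\<dots> \<le> \<bar>of_int k * \<theta> - of_int h\<bar>" using ln_2_less_1 by (intro mult_left_le_one_le) auto
  finally have d1: "\<bar>\<delta>\<bar> < inverse (real N)" using hk(2) by (simp add: inverse_eq_divide)
  have e3: "exp (real kn * ln 3) = real 3^kn" by (simp add: exp_of_nat_mult)
  have e2: "exp (real hn * ln 2) = real 2^hn" by (simp add: exp_of_nat_mult)
  have expd: "exp \<delta> = real 3^kn / real 2^hn" using e2 e3 \<delta>_def by (simp add: exp_diff)
  have expmd: "exp (-\<delta>) = real 2^hn / real 3^kn" using e2 e3 \<delta>_def by (simp add: exp_diff)
  have "\<delta> \<noteq> 0"
  proof
    assume "\<delta> = 0"
    then have "real 3^kn / real 2^hn = 1" using expd by simp
    then have "real (3^kn) = real (2^hn)" by (simp add: divide_eq_1_iff)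
    then have eq: "(3::nat)^kn = 2^hn" by (simp only: of_nat_eq_iff)
    have "even ((2::nat)^hn)" using hn1 by simp
    moreover have "odd ((3::nat)^kn)" by simp
    ultimately show False using eq by simp
  qed
  then consider "\<delta> > 0" | "\<delta> < 0" by linarith
  then show ?thesis
  proof cases
    case 1
    then have "1 < exp \<delta> \<and> exp \<delta> < 1 + \<epsilon>" using d1 N by (intro exp_small) auto
    then show ?thesis using expd by metis
  next
    case 2
    then have "1 < exp (-\<delta>) \<and> exp (-\<delta>) < 1 + \<epsilon>" using d1 N by (intro exp_small) auto
    then show ?thesis using expmd by metis
  qed
qed

lemma gap: assumes "\<epsilon> > 0"
  shows "\<exists>Y. \<forall>y\<ge>Y. \<exists>h\<in>hamming. y < real h \<and> real h \<le> (1+\<epsilon>)*y"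
proof -
  obtain a b :: nat where ab: "(1 < real 3^b/real 2^a \<and> real 3^b/real 2^a < 1+\<epsilon>) \<or>
                    (1 < real 2^a/real 3^b \<and> real 2^a/real 3^b < 1+\<epsilon>)"
    using ratio_ex assms by blast
  then show ?thesis
  proof
    assume r: "1 < real 3^b/real 2^a \<and> real 3^b/real 2^a < 1+\<epsilon>"
    show ?thesis by (rule gap_from_ratio[of 2 3 b a]) (use r in auto)
  next
    assume r: "1 < real 2^a/real 3^b \<and> real 2^a/real 3^b < 1+\<epsilon>"
    have m: "3^x*2^y \<in> hamming" for x y :: nat by (metis ham_mem mult.commute)
    show ?thesis by (rule gap_from_ratio[of 3 2 a b]) (use r m in auto)
  qed
qed


lemma small_ev: fixes C \<epsilon> :: real assumes "\<epsilon> > 0"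
  shows "\<exists>N0. \<forall>N\<ge>N0. C + log 2 (3 * real N) + (log 2 (real N) + 1)^2 \<le> \<epsilon> * real N"
proof -
  have "(\<lambda>N::nat. (C + log 2 (3 * real N) + (log 2 (real N) + 1)^2) / real N) \<longlonglongrightarrow> 0"
    by real_asymp
  then have "eventually (\<lambda>N::nat. (C + log 2 (3 * real N) + (log 2 (real N) + 1)^2) / real N < \<epsilon>) sequentially"
    using assms order_tendstoD(2) by blast
  then obtain N0 where N0: "\<forall>N\<ge>N0. (C + log 2 (3 * real N) + (log 2 (real N) + 1)^2) / real N < \<epsilon>"
    unfolding eventually_sequentially by blast
  show ?thesis
  proof (intro exI[of _ "max N0 1"] allI impI)
    fix N :: nat assume "max N0 1 \<le> N"
    then have "N \<ge> N0" "real N > 0" by auto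
    then show "C + log 2 (3 * real N) + (log 2 (real N) + 1)^2 \<le> \<epsilon> * real N"
      using N0 by (simp add: divide_less_eq less_imp_le)
  qed
qed

lemma card_interval_real: fixes S :: "nat set" assumes "finite S" "d \<ge> 0"
  and "\<And>n. n \<in> S \<Longrightarrow> a \<le> real n \<and> real n \<le> a + d"
  shows "real (card S) \<le> d + 1"
proof (cases "S = {}")
  case True then show ?thesis using assms by simp
next
  case False
  let ?m = "Min S" and ?M = "Max S"
  have "S \<subseteq> {?m..?M}" using assms(1) by auto
  then have "card S \<le> card {?m..?M}" by (rule card_mono[rotated]) simp
  also have "\<dots> = ?M + 1 - ?m" by simp
  finally have c: "card S \<le> ?M + 1 - ?m" .
  have "?m \<in> S" "?M \<in> S" using False assms(1) by auto
  then have "a \<le> real ?m" "real ?M \<le> a + d" "?m \<le> ?M" using assms(3) assms(1) False by auto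
  moreover have "real (?M + 1 - ?m) = real ?M + 1 - real ?m" using \<open>?m \<le> ?M\<close> by (simp add: of_nat_diff)
  moreover have "real (card S) \<le> real (?M + 1 - ?m)" using c by (simp only: of_nat_le_iff)
  ultimately show ?thesis by linarith
qed

lemma geom_le: fixes q :: nat assumes "q \<ge> 2" shows "(\<Sum>j<L. real q^j) \<le> real q^L"
proof (induction L)
  case 0 then show ?case by simp
next
  case (Suc L)
  have "(\<Sum>j<Suc L. real q^j) \<le> real q^L + real q^L" using Suc by simp
  also have "\<dots> \<le> real q * real q^L" using assms by (simp add: mult_right_mono flip: mult_2)
  finally show ?case by simp
qed

lemma near_count:
  fixes q c N :: nat and \<epsilon> :: real
  assumes q: "q \<ge> 2" and c: "c \<ge> 1" and e: "\<epsilon> \<ge> 0" and N: "N \<ge> 1"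
  shows "real (card ({n. \<exists>j. real q^j \<le> real c * real n \<and> real c * real n \<le> (1+\<epsilon>) * real q^j} \<inter> {0..<N}))
     \<le> \<epsilon> * real q * real N + log 2 (real c * real N) + 1"
proof -
  define M where "M = c*N"
  have M1: "M \<ge> 1" using c N M_def by simp
  have exL: "\<exists>j. M \<le> q^j"
  proof
    have "M < 2^M" by (rule less_exp)
    also have "(2::nat)^M \<le> q^M" using q by (intro power_mono) auto
    finally show "M \<le> q^M" by simp
  qed
  define L where "L = (LEAST j. M \<le> q^j)"
  have Lj: "j < L \<longleftrightarrow> q^j < M" for j
  proof
    assume "j < L" then show "q^j < M" using not_less_Least L_def by (metis not_le)
  next
    assume qj: "q^j < M"
    show "j < L"
    proof (rule ccontr)
      assume "\<not> j < L"
      then have "q^L \<le> q^j" using q by (intro power_increasing) auto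
      moreover have "M \<le> q^L" using LeastI_ex[OF exL] L_def by simp
      ultimately show False using qj by simp
    qed
  qed
  define S where "S j = {n. real q^j \<le> real c * real n \<and> real c * real n \<le> (1+\<epsilon>) * real q^j} \<inter> {0..<N}" for j
  have sub: "{n. \<exists>j. real q^j \<le> real c * real n \<and> real c * real n \<le> (1+\<epsilon>) * real q^j} \<inter> {0..<N} \<subseteq> (\<Union>j<L. S j)"
  proof
    fix n assume "n \<in> {n. \<exists>j. real q^j \<le> real c * real n \<and> real c * real n \<le> (1+\<epsilon>) * real q^j} \<inter> {0..<N}"
    then obtain j where j: "real q^j \<le> real c * real n" "real c * real n \<le> (1+\<epsilon>) * real q^j" "n < N" by auto
    have "c*n < c*N" using j(3) c by simp
    then have "real q^j < real M" using j(1) M_def by (metis of_nat_less_iff of_nat_mult le_less_trans)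
    then have "q^j < M" by (metis of_nat_less_iff of_nat_power)
    then have "j < L" using Lj by simp
    then show "n \<in> (\<Union>j<L. S j)" using j S_def by auto
  qed
  have cS: "real (card (S j)) \<le> \<epsilon> * real q^j / real c + 1" for j
  proof (rule card_interval_real)
    show "finite (S j)" unfolding S_def by auto
    show "0 \<le> \<epsilon> * real q ^ j / real c" using e by simp
    fix n assume "n \<in> S j"
    then have n: "real q^j \<le> real c * real n" "real c * real n \<le> (1+\<epsilon>) * real q^j" unfolding S_def by auto
    have cpos: "real c > 0" using c by simp
    show "real q ^ j / real c \<le> real n \<and> real n \<le> real q ^ j / real c + \<epsilon> * real q ^ j / real c"
      using n cpos by (auto simp: field_simps)
  qed
  have "real (card ({n. \<exists>j. real q^j \<le> real c * real n \<and> real c * real n \<le> (1+\<epsilon>) * real q^j} \<inter> {0..<N}))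
      \<le> real (card (\<Union>j<L. S j))"
    using sub by (intro of_nat_mono card_mono) (auto simp: S_def)
  also have "\<dots> \<le> real (\<Sum>j<L. card (S j))" using card_UN_le[of "{..<L}" S] by (simp only: of_nat_le_iff) simp
  also have "\<dots> \<le> (\<Sum>j<L. \<epsilon> * real q^j / real c + 1)" unfolding of_nat_sum using cS by (intro sum_mono) auto
  also have "\<dots> = \<epsilon> / real c * (\<Sum>j<L. real q^j) + real L" by (simp add: sum.distrib sum_distrib_left)
  also have "\<dots> \<le> \<epsilon> / real c * (real q * real M) + real L"
  proof -
    have "(\<Sum>j<L. real q^j) \<le> real q^L" using geom_le q by blast
    also have "\<dots> \<le> real q * real M"
    proof (cases L)
      case 0 then show ?thesis using q M1 by (simp add: mult_ge1_I)
    next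
      case (Suc L')
      then have "q^L' < M" using Lj[of L'] by simp
      then have "real q ^ L' \<le> real M" by (metis of_nat_le_iff of_nat_power less_imp_le)
      then show ?thesis using Suc by (simp add: mult_left_mono)
    qed
    finally show ?thesis using e c by (intro add_right_mono mult_left_mono) auto
  qed
  also have "\<dots> = \<epsilon> * real q * real N + real L" using c M_def by (simp add: field_simps)
  also have "\<dots> \<le> \<epsilon> * real q * real N + (log 2 (real c * real N) + 1)"
  proof -
    have "real L \<le> log 2 (real M) + 1"
    proof (cases L)
      case 0 then show ?thesis using M1 by simp
    next
      case (Suc L')
      then have "q^L' < M" using Lj[of L'] by simp
      moreover have "2^L' \<le> q^L'" using q by (simp add: power_mono)
      ultimately have "real (2^L') < real M" by linarith
      then have "(2::real)^L' < real M" by simp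
      then have "real L' < log 2 (real M)" by (rule less_log_of_power) simp
      then show ?thesis using Suc by simp
    qed
    then show ?thesis using M_def by simp
  qed
  finally show ?thesis by simp
qed


definition sparse :: "nat set \<Rightarrow> bool" where
  "sparse A \<longleftrightarrow> (\<forall>\<epsilon>>0. \<exists>N0. \<forall>N\<ge>N0. real (card (A \<inter> {0..<N})) \<le> \<epsilon> * real N)"

lemma sparse_density: assumes "sparse A" shows "upper_density A = 0"
proof -
  have lim: "(\<lambda>N. real (card (A \<inter> {0..<N})) / real N) \<longlonglongrightarrow> 0"
  proof (rule LIMSEQ_I)
    fix r :: real assume r: "0 < r"
    obtain N0 where N0: "\<forall>N\<ge>N0. real (card (A \<inter> {0..<N})) \<le> r/2 * real N"
      using assms r unfolding sparse_def by (meson half_gt_zero)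
    show "\<exists>no. \<forall>n\<ge>no. norm (real (card (A \<inter> {0..<n})) / real n - 0) < r"
    proof (intro exI[of _ "max N0 1"] allI impI)
      fix n assume "max N0 1 \<le> n"
      then have n: "n \<ge> N0" "real n > 0" by auto
      then have "real (card (A \<inter> {0..<n})) / real n \<le> r/2"
        using N0 by (simp add: divide_le_eq)
      moreover have "norm (real (card (A \<inter> {0..<n})) / real n - 0) = real (card (A \<inter> {0..<n})) / real n" by simp
      ultimately show "norm (real (card (A \<inter> {0..<n})) / real n - 0) < r" using r by linarith
    qed
  qed
  then have "(\<lambda>N. ereal (real (card (A \<inter> {0..<N})) / real N)) \<longlonglongrightarrow> ereal 0"
    by (rule tendsto_ereal)
  then have "limsup (\<lambda>N. ereal (real (card (A \<inter> {0..<N})) / real N)) = ereal 0"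
    by (intro lim_imp_Limsup) auto
  then show ?thesis unfolding upper_density_def by (simp add: zero_ereal_def)
qed

lemma sparse_mono: assumes "A \<subseteq> B" "sparse B" shows "sparse A"
  unfolding sparse_def
proof (intro allI impI)
  fix \<epsilon> :: real assume "\<epsilon> > 0"
  then obtain N0 where N0: "\<forall>N\<ge>N0. real (card (B \<inter> {0..<N})) \<le> \<epsilon> * real N"
    using assms(2) unfolding sparse_def by blast
  have "card (A \<inter> {0..<N}) \<le> card (B \<inter> {0..<N})" for N
    using assms(1) by (intro card_mono) auto
  then show "\<exists>N0. \<forall>N\<ge>N0. real (card (A \<inter> {0..<N})) \<le> \<epsilon> * real N"
    using N0 by (meson of_nat_le_iff order_trans)
qed

lemma sparse_Un: assumes "sparse A" "sparse B" shows "sparse (A \<union> B)"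
  unfolding sparse_def
proof (intro allI impI)
  fix \<epsilon> :: real assume e: "\<epsilon> > 0"
  obtain N1 where N1: "\<forall>N\<ge>N1. real (card (A \<inter> {0..<N})) \<le> \<epsilon>/2 * real N"
    using assms(1) e unfolding sparse_def by (meson half_gt_zero)
  obtain N2 where N2: "\<forall>N\<ge>N2. real (card (B \<inter> {0..<N})) \<le> \<epsilon>/2 * real N"
    using assms(2) e unfolding sparse_def by (meson half_gt_zero)
  have c: "card ((A \<union> B) \<inter> {0..<N}) \<le> card (A \<inter> {0..<N}) + card (B \<inter> {0..<N})" for N
  proof -
    have "(A \<union> B) \<inter> {0..<N} = (A \<inter> {0..<N}) \<union> (B \<inter> {0..<N})" by auto
    then show ?thesis by (simp add: card_Un_le)
  qed
  show "\<exists>N0. \<forall>N\<ge>N0. real (card ((A \<union> B) \<inter> {0..<N})) \<le> \<epsilon> * real N"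
  proof (intro exI[of _ "max N1 N2"] allI impI)
    fix N assume "max N1 N2 \<le> N"
    then have "real (card (A \<inter> {0..<N})) \<le> \<epsilon>/2 * real N" "real (card (B \<inter> {0..<N})) \<le> \<epsilon>/2 * real N"
      using N1 N2 by auto
    moreover have "real (card ((A \<union> B) \<inter> {0..<N})) \<le> real (card (A \<inter> {0..<N})) + real (card (B \<inter> {0..<N}))"
      using c[of N] by (simp only: of_nat_add[symmetric] of_nat_le_iff)
    ultimately show "real (card ((A \<union> B) \<inter> {0..<N})) \<le> \<epsilon> * real N" by linarith
  qed
qed

lemma sparse_crit:
  assumes "\<And>\<epsilon>. \<epsilon> > 0 \<Longrightarrow> \<exists>C. \<forall>N\<ge>1. real (card (A \<inter> {0..<N})) \<le> C + \<epsilon> * real N + log 2 (3 * real N) + (log 2 (real N) + 1)^2"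
  shows "sparse A"
  unfolding sparse_def
proof (intro allI impI)
  fix \<epsilon> :: real assume e: "\<epsilon> > 0"
  obtain C where C: "\<forall>N\<ge>1. real (card (A \<inter> {0..<N})) \<le> C + \<epsilon>/2 * real N + log 2 (3 * real N) + (log 2 (real N) + 1)^2"
    using assms[of "\<epsilon>/2"] e by auto
  obtain N0 where N0: "\<forall>N\<ge>N0. C + log 2 (3 * real N) + (log 2 (real N) + 1)^2 \<le> \<epsilon>/2 * real N"
    using small_ev[of "\<epsilon>/2" C] e by auto
  show "\<exists>N0. \<forall>N\<ge>N0. real (card (A \<inter> {0..<N})) \<le> \<epsilon> * real N"
  proof (intro exI[of _ "max N0 1"] allI impI)
    fix N assume "max N0 1 \<le> N"
    then have "C + log 2 (3 * real N) + (log 2 (real N) + 1)^2 \<le> \<epsilon>/2 * real N"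
      "real (card (A \<inter> {0..<N})) \<le> C + \<epsilon>/2 * real N + log 2 (3 * real N) + (log 2 (real N) + 1)^2"
      using N0 C by auto
    then show "real (card (A \<inter> {0..<N})) \<le> \<epsilon> * real N" by linarith
  qed
qed

lemma sparse_finite: assumes "finite A" shows "sparse A"
proof (rule sparse_crit)
  fix \<epsilon> :: real assume e: "\<epsilon> > 0"
  show "\<exists>C. \<forall>N\<ge>1. real (card (A \<inter> {0..<N})) \<le> C + \<epsilon> * real N + log 2 (3 * real N) + (log 2 (real N) + 1)^2"
  proof (intro exI[of _ "real (card A)"] allI impI)
    fix N :: nat assume N: "N \<ge> 1"
    have "card (A \<inter> {0..<N}) \<le> card A" using assms by (intro card_mono) auto
    then have "real (card (A \<inter> {0..<N})) \<le> real (card A)" by (simp only: of_nat_le_iff)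
    moreover have "log 2 (3 * real N) \<ge> 0" using N by simp
    moreover have "\<epsilon> * real N \<ge> 0" using e by simp
    ultimately show "real (card (A \<inter> {0..<N})) \<le> real (card A) + \<epsilon> * real N + log 2 (3 * real N) + (log 2 (real N) + 1)^2"
      using zero_le_power2[of "log 2 (real N) + 1"] by linarith
  qed
qed

lemma ham_count: assumes "N \<ge> 1" shows "real (card {h\<in>hamming. h \<le> N}) \<le> (log 2 (real N) + 1)^2"
proof -
  define L where "L = nat \<lfloor>log 2 (real N)\<rfloor>"
  have lg0: "log 2 (real N) \<ge> 0" using assms by simp
  have bnd: "x \<le> L" if "2^x \<le> N" for x
  proof -
    have "real x \<le> log 2 (real N)" using that by (intro le_log_of_power) (auto simp flip: of_nat_power)
    then have "int x \<le> \<lfloor>log 2 (real N)\<rfloor>" by (simp add: le_floor_iff)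
    then show ?thesis unfolding L_def by linarith
  qed
  have "{h\<in>hamming. h \<le> N} \<subseteq> (\<lambda>(a,b). 2^a*3^b) ` ({..L} \<times> {..L})"
  proof
    fix h assume "h \<in> {h\<in>hamming. h \<le> N}"
    then obtain a b where h: "h = 2^a*3^b" "h \<le> N" unfolding hamming_def by auto
    have "(2::nat)^a \<le> 2^a*3^b" by simp
    then have "a \<le> L" using h bnd by (meson order_trans)
    have "(2::nat)^b \<le> 3^b" by (intro power_mono) auto
    also have "\<dots> \<le> 2^a*3^b" by simp
    finally have "b \<le> L" using h bnd by (meson order_trans)
    show "h \<in> (\<lambda>(a,b). 2^a*3^b) ` ({..L} \<times> {..L})" using h \<open>a \<le> L\<close> \<open>b \<le> L\<close> by auto
  qed
  then have "card {h\<in>hamming. h \<le> N} \<le> card ((\<lambda>(a,b). (2::nat)^a*3^b) ` ({..L} \<times> {..L}))"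
    by (intro card_mono) auto
  also have "\<dots> \<le> card ({..L} \<times> {..L})" by (rule card_image_le) auto
  also have "\<dots> = (L+1)^2" by (simp add: power2_eq_square)
  finally have "real (card {h\<in>hamming. h \<le> N}) \<le> real ((L+1)^2)" by (simp only: of_nat_le_iff)
  then have c: "real (card {h\<in>hamming. h \<le> N}) \<le> (real L + 1)^2" by (simp add: add.commute)
  have "real L \<le> log 2 (real N)" unfolding L_def using lg0 by linarith
  then have "(real L + 1)^2 \<le> (log 2 (real N) + 1)^2" by (intro power_mono) auto
  then show ?thesis using c by linarith
qed

lemma sparse_bad1: "sparse {n. f (n+1) \<noteq> f n}"
proof (rule sparse_mono)
  show "{n. f (n+1) \<noteq> f n} \<subseteq> {0} \<union> {n. Suc n \<in> hamming}"
  proof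
    fix n assume "n \<in> {n. f (n+1) \<noteq> f n}"
    then show "n \<in> {0} \<union> {n. Suc n \<in> hamming}" by (cases "n = 0") (use bad1[of n] in auto)
  qed
  show "sparse ({0} \<union> {n. Suc n \<in> hamming})"
  proof (rule sparse_Un[OF sparse_finite], simp, rule sparse_crit)
    fix \<epsilon> :: real assume e: "\<epsilon> > 0"
    show "\<exists>C. \<forall>N\<ge>1. real (card ({n. Suc n \<in> hamming} \<inter> {0..<N})) \<le> C + \<epsilon> * real N + log 2 (3 * real N) + (log 2 (real N) + 1)^2"
    proof (intro exI[of _ 0] allI impI)
      fix N :: nat assume N: "N \<ge> 1"
      have "Suc ` ({n. Suc n \<in> hamming} \<inter> {0..<N}) \<subseteq> {h\<in>hamming. h \<le> N}" by auto
      then have "card (Suc ` ({n. Suc n \<in> hamming} \<inter> {0..<N})) \<le> card {h\<in>hamming. h \<le> N}"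
        by (intro card_mono) auto
      then have "card ({n. Suc n \<in> hamming} \<inter> {0..<N}) \<le> card {h\<in>hamming. h \<le> N}"
        by (simp add: card_image)
      then have "real (card ({n. Suc n \<in> hamming} \<inter> {0..<N})) \<le> (log 2 (real N) + 1)^2"
        using ham_count[OF N] by (meson of_nat_le_iff order_trans)
      moreover have "log 2 (3 * real N) \<ge> 0" using N by simp
      moreover have "\<epsilon> * real N \<ge> 0" using e by simp
      ultimately show "real (card ({n. Suc n \<in> hamming} \<inter> {0..<N})) \<le> 0 + \<epsilon> * real N + log 2 (3 * real N) + (log 2 (real N) + 1)^2"
        by linarith
    qed
  qed
qed

lemma reduce_gen: fixes k q :: nat assumes k: "k \<ge> 2" and e: "\<epsilon>0 > 0"
  shows "\<exists>Z::nat. \<forall>n h d. ismax n h \<and> k*h < q^d \<and> q^d \<le> k*n \<longrightarrow> n < Z \<or> real k * real n \<le> (1+\<epsilon>0) * real q^d"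
proof -
  obtain Y where Y: "\<forall>y\<ge>Y. \<exists>h\<in>hamming. y < real h \<and> real h \<le> (1+\<epsilon>0)*y" using gap e by blast
  have kp: "real k > 0" using k by simp
  have "\<forall>n h d. ismax n h \<and> k*h < q^d \<and> q^d \<le> k*n \<longrightarrow> n < nat \<lceil>real k * Y\<rceil> \<or> real k * real n \<le> (1+\<epsilon>0) * real q^d"
  proof (intro allI impI)
    fix n h d assume a: "ismax n h \<and> k*h < q^d \<and> q^d \<le> k*n"
    have khq: "real k * real h < real q^d" using a by (metis of_nat_less_iff of_nat_mult of_nat_power)
    show "n < nat \<lceil>real k * Y\<rceil> \<or> real k * real n \<le> (1+\<epsilon>0) * real q^d"
    proof (cases "real q^d / real k \<ge> Y")
      case True
      then obtain h2 where h2: "h2 \<in> hamming" "real q^d / real k < real h2" "real h2 \<le> (1+\<epsilon>0) * (real q^d / real k)"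
        using Y by blast
      have "\<not> h2 \<le> n"
      proof
        assume "h2 \<le> n"
        then have "h2 \<le> h" using a h2(1) unfolding ismax_def by auto
        then have "real k * real h2 \<le> real k * real h" using kp by simp
        moreover have "real q^d < real k * real h2" using h2(2) kp by (simp add: divide_less_eq mult.commute)
        ultimately show False using khq by linarith
      qed
      then have "real n < real h2" by simp
      then have "real n \<le> (1+\<epsilon>0) * (real q^d / real k)" using h2(3) by linarith
      then have "real k * real n \<le> (1+\<epsilon>0) * real q^d" using kp by (simp add: field_simps)
      then show ?thesis by simp
    next
      case False
      have "n < 2*h" using a ismax_lt2 by blast
      also have "2*h \<le> k*h" using k by simp
      finally have "real n < real k * real h" by (metis of_nat_less_iff of_nat_mult)
      also have "\<dots> < real q^d" using khq .
      also have "\<dots> < real k * Y" using False kp by (simp add: field_simps)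
      finally have "real n < real k * Y" .
      then have "n < nat \<lceil>real k * Y\<rceil>" by linarith
      then show ?thesis by simp
    qed
  qed
  then show ?thesis by blast
qed

lemma sparse_bad_gen: fixes k q :: nat assumes k: "k \<ge> 2" "k \<le> 3" and q: "q \<ge> 2" "q \<le> 3"
  shows "sparse {n. \<exists>h d. ismax n h \<and> k*h < q^d \<and> q^d \<le> k*n}"
proof (rule sparse_crit)
  fix \<epsilon> :: real assume e: "\<epsilon> > 0"
  define \<epsilon>0 where "\<epsilon>0 = \<epsilon>/3"
  have e0: "\<epsilon>0 > 0" using e \<epsilon>0_def by simp
  obtain Z :: nat where Z: "\<forall>n h d. ismax n h \<and> k*h < q^d \<and> q^d \<le> k*n \<longrightarrow> n < Z \<or> real k * real n \<le> (1+\<epsilon>0) * real q^d"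
    using reduce_gen[OF k(1) e0] by blast
  define Near where "Near = {n. \<exists>j. real q^j \<le> real k * real n \<and> real k * real n \<le> (1+\<epsilon>0) * real q^j}"
  have sub: "{n. \<exists>h d. ismax n h \<and> k*h < q^d \<and> q^d \<le> k*n} \<subseteq> {..<Z} \<union> Near"
  proof
    fix n assume "n \<in> {n. \<exists>h d. ismax n h \<and> k*h < q^d \<and> q^d \<le> k*n}"
    then obtain h d where a: "ismax n h" "k*h < q^d" "q^d \<le> k*n" by blast
    have "real (q^d) \<le> real (k * n)" using a(3) by (simp only: of_nat_le_iff)
    then have r: "real q^d \<le> real k * real n" by simp
    have "n < Z \<or> real k * real n \<le> (1+\<epsilon>0) * real q^d" using Z[rule_format, of n h d] a by simp
    then show "n \<in> {..<Z} \<union> Near" using r unfolding Near_def by auto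
  qed
  show "\<exists>C. \<forall>N\<ge>1. real (card ({n. \<exists>h d. ismax n h \<and> k*h < q^d \<and> q^d \<le> k*n} \<inter> {0..<N})) \<le> C + \<epsilon> * real N + log 2 (3 * real N) + (log 2 (real N) + 1)^2"
  proof (intro exI[of _ "real Z + 1"] allI impI)
    fix N :: nat assume N: "N \<ge> 1"
    have "card ({n. \<exists>h d. ismax n h \<and> k*h < q^d \<and> q^d \<le> k*n} \<inter> {0..<N}) \<le> card (({..<Z} \<union> Near) \<inter> {0..<N})"
      using sub by (intro card_mono) auto
    also have "\<dots> \<le> card ({..<Z} \<inter> {0..<N}) + card (Near \<inter> {0..<N})"
    proof -
      have "({..<Z} \<union> Near) \<inter> {0..<N} = ({..<Z} \<inter> {0..<N}) \<union> (Near \<inter> {0..<N})" by auto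
      then show ?thesis by (simp add: card_Un_le)
    qed
    also have "\<dots> \<le> Z + card (Near \<inter> {0..<N})"
    proof -
      have "card ({..<Z} \<inter> {0..<N}) \<le> card {..<Z}" by (intro card_mono) auto
      then show ?thesis by simp
    qed
    finally have c1: "real (card ({n. \<exists>h d. ismax n h \<and> k*h < q^d \<and> q^d \<le> k*n} \<inter> {0..<N})) \<le> real Z + real (card (Near \<inter> {0..<N}))"
      by (simp only: of_nat_add[symmetric] of_nat_le_iff)
    have c2: "real (card (Near \<inter> {0..<N})) \<le> \<epsilon>0 * real q * real N + log 2 (real k * real N) + 1"
      unfolding Near_def using near_count[of q k \<epsilon>0 N] q k e0 N by simp
    have "\<epsilon>0 * real q * real N \<le> \<epsilon>0 * 3 * real N" using q e0 by (intro mult_right_mono mult_left_mono) auto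
    also have "\<dots> = \<epsilon> * real N" unfolding \<epsilon>0_def by simp
    finally have "\<epsilon>0 * real q * real N \<le> \<epsilon> * real N" .
    moreover have "log 2 (real k * real N) \<le> log 2 (3 * real N)"
    proof -
      have "real k * real N \<le> 3 * real N" using k by (intro mult_right_mono) auto
      moreover have "real k * real N > 0" using k N by simp
      ultimately show ?thesis by simp
    qed
    moreover have "(log 2 (real N) + 1)^2 \<ge> 0" by simp
    ultimately show "real (card ({n. \<exists>h d. ismax n h \<and> k*h < q^d \<and> q^d \<le> k*n} \<inter> {0..<N})) \<le> (real Z + 1) + \<epsilon> * real N + log 2 (3 * real N) + (log 2 (real N) + 1)^2"
      using c1 c2 by linarith
  qed
qed

theorem lemma4p2:
  shows "almost_all (\<lambda>n. f (n + 1) = f n \<and> f (2 * n) = - f n \<and> f (3 * n) = - f n)"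
proof -
  have sub: "{n. \<not> (f (n + 1) = f n \<and> f (2 * n) = - f n \<and> f (3 * n) = - f n)} \<subseteq>
     {n. f (n+1) \<noteq> f n} \<union> ({0} \<union> ({n. \<exists>h d. ismax n h \<and> 2*h < 3^d \<and> 3^d \<le> 2*n} \<union>
        {n. \<exists>h d. ismax n h \<and> 3*h < 2^d \<and> 2^d \<le> 3*n}))"
  proof
    fix n assume n: "n \<in> {n. \<not> (f (n + 1) = f n \<and> f (2 * n) = - f n \<and> f (3 * n) = - f n)}"
    show "n \<in> {n. f (n+1) \<noteq> f n} \<union> ({0} \<union> ({n. \<exists>h d. ismax n h \<and> 2*h < 3^d \<and> 3^d \<le> 2*n} \<union>
        {n. \<exists>h d. ismax n h \<and> 3*h < 2^d \<and> 2^d \<le> 3*n}))"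
    proof (cases "n = 0")
      case True then show ?thesis by simp
    next
      case False
      then have n1: "n \<ge> 1" by simp
      show ?thesis using n bad2[OF n1] bad3[OF n1] by blast
    qed
  qed
  have "sparse ({n. f (n+1) \<noteq> f n} \<union> ({0} \<union> ({n. \<exists>h d. ismax n h \<and> 2*h < 3^d \<and> 3^d \<le> 2*n} \<union>
        {n. \<exists>h d. ismax n h \<and> 3*h < 2^d \<and> 2^d \<le> 3*n})))"
    by (intro sparse_Un sparse_bad1 sparse_finite sparse_bad_gen) auto
  then have "sparse {n. \<not> (f (n + 1) = f n \<and> f (2 * n) = - f n \<and> f (3 * n) = - f n)}"
    using sub sparse_mono by blast
  then show ?thesis unfolding almost_all_def by (rule sparse_density)
qed

end
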